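(* For almost every realization of the synaptic weights $(J_n)_{n\ge 0}$ and of the Brownian motions, the empirical measure $\hat\mu_n(V_n)$ of the solution $V_n=(V^j)_{j\in I_n}$ of the network equations converges to $\mu_*$ as $N\to\infty$, in the weak topology on $\mathcal{P}_S(\mathcal{T}^{\mathbb{Z}})$.
   Context: Fix $\sigma>0$, $T>0$ and a function $f:\mathbb{R}\to[0,1]$ which is Lipschitz continuous with Lipschitz constant $1$. Let $\mathcal{T}=C([0,T],\mathbb{R})$. For $n\ge 0$ let $I_n=\{-n,\dots,n\}$ and $N=2n+1$; for an integer $k$, "$k \bmod I_n$" is the unique element of $I_n$ congruent to $k$ modulo $N$. Let $R_{\mathcal J}:\mathbb{Z}\times\mathbb{Z}\to\mathbb{R}$ satisfy $|R_{\mathcal J}(k,l)|\le a_kb_l$ for positive sequences with $|k|^3a_k\to0$ as $|k|\to\infty$ and $\sum_l b_l<\infty$; assume $R_{\mathcal J}$ is the autocorrelation of a centered stationary Gaussian field $(J^{ij})_{i,j\in\mathbb{Z}}$ whose spectral density $\sum_{k,l}R_{\mathcal J}(k,l)e^{-ik\varphi_1}e^{-il\varphi_2}$ is strictly positive on $[-\pi,\pi)^2$. Under a probability $\gamma$, for each $n$ the weights $J_n=(J_n^{ij})_{i,j\in I_n}$ are centered jointly Gaussian with $\mathbb{E}^\gamma[J_n^{ij}J_n^{kl}]=\frac1N R_{\mathcal J}((k-i)\bmod I_n,(l-j)\bmod I_n)$. Given $J_n$, $V_n$ solves $dV^i_t=\sum_{j\in I_n}J_n^{ij}f(V^j_t)\,dt+\sigma\,dB^i_t$,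 $V^i_0=0$, $i\in I_n$, with $(B^i)$ independent standard Brownian motions independent of the weights; $P^N(J_n)$ is the law of $V_n$ on $\mathcal{T}^N$, and $Q^n=\mathbb{E}^\gamma[P^N(J_n)]$ is the annealed law. Shifts: $(S^iu)^j=u^{i+j}$ on $\mathcal{T}^{\mathbb{Z}}$; $\mathcal{P}_S(\mathcal{T}^{\mathbb{Z}})$ is the set of shift-invariant Borel probability measures on $\mathcal{T}^{\mathbb{Z}}$. For $u_n\in\mathcal{T}^N$ let $u_{n,p}\in\mathcal{T}^{\mathbb{Z}}$ be its periodic extension $u_{n,p}^j=u_n^{j\bmod I_n}$ and $\hat\mu_n(u_n)=\frac1N\sum_{i\in I_n}\delta_{S^iu_{n,p}}\in\mathcal{P}_S(\mathcal{T}^{\mathbb{Z}})$. Let $\Pi^n=Q^n\circ\hat\mu_n^{-1}$. The sequence $(\Pi^n)$ satisfies a large deviation principle on $\mathcal{P}_S(\mathcal{T}^{\mathbb{Z}})$ (weak topology) with a good rate function $H$ which has a unique zero; $\mu_*$ denotes this unique zero. *)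

theory Defs
  imports "HOL-Probability.Probability"
begin

definition Iset :: "nat \<Rightarrow> int set" where
  "Iset n = {- int n .. int n}"

definition Nn :: "nat \<Rightarrow> nat" where
  "Nn n = 2 * n + 1"

definition modI :: "nat \<Rightarrow> int \<Rightarrow> int" where
  "modI n k = (k + int n) mod int (Nn n) - int n"

text \<open>C([0,T],R) with the sup metric; elements are extensional on [0,T].\<close>
definition pathspace :: "real \<Rightarrow> (real \<Rightarrow> real) metric" where
  "pathspace T = cfunspace (top_of_set {0..T}) euclidean_metric"

definition pathtop :: "real \<Rightarrow> (real \<Rightarrow> real) topology" where
  "pathtop T = mtopology_of (pathspace T)"

definition seqtop :: "real \<Rightarrow> (int \<Rightarrow> real \<Rightarrow> real) topology" where
  "seqtop T = product_topology (\<lambda>_. pathtop T) UNIV"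

definition borel_of :: "'a topology \<Rightarrow> 'a measure" where
  "borel_of X = sigma (topspace X) {U. openin X U}"

definition shift :: "int \<Rightarrow> (int \<Rightarrow> 'a) \<Rightarrow> int \<Rightarrow> 'a" where
  "shift i u = (\<lambda>j. u (i + j))"

definition periodic_ext :: "nat \<Rightarrow> (int \<Rightarrow> 'a) \<Rightarrow> int \<Rightarrow> 'a" where
  "periodic_ext n u = (\<lambda>j. u (modI n j))"

text \<open>Empirical measure (1/N) sum_{i in I_n} delta_{S^i u_{n,p}}, written as the
  image of the uniform probability on I_n.\<close>
definition emp_measure :: "real \<Rightarrow> nat \<Rightarrow> (int \<Rightarrow> real \<Rightarrow> real) \<Rightarrow> (int \<Rightarrow> real \<Rightarrow> real) measure" where
  "emp_measure T n u =
     distr (uniform_measure (count_space UNIV) (Iset n)) (borel_of (seqtop T))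
           (\<lambda>i. shift i (periodic_ext n u))"

definition PS :: "real \<Rightarrow> (int \<Rightarrow> real \<Rightarrow> real) measure set" where
  "PS T = {\<mu>. prob_space \<mu> \<and> sets \<mu> = sets (borel_of (seqtop T)) \<and>
              (\<forall>i. distr \<mu> (borel_of (seqtop T)) (shift i) = \<mu>)}"

definition bcont :: "'a topology \<Rightarrow> ('a \<Rightarrow> real) set" where
  "bcont X = {\<phi>. continuous_map X euclideanreal \<phi> \<and> (\<exists>B. \<forall>x\<in>topspace X. \<bar>\<phi> x\<bar> \<le> B)}"

definition weaktop :: "real \<Rightarrow> (int \<Rightarrow> real \<Rightarrow> real) measure topology" where
  "weaktop T = subtopology
     (topology_generated_by
        {{\<mu>. (\<integral>x. \<phi> x \<partial>\<mu>) \<in> U} | \<phi> U. \<phi> \<in> bcont (seqtop T) \<and> open U})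
     (PS T)"

definition elog :: "real \<Rightarrow> ereal" where
  "elog x = (if x = 0 then - \<infinity> else ereal (ln x))"

definition good_rate_function :: "'a topology \<Rightarrow> ('a \<Rightarrow> ereal) \<Rightarrow> bool" where
  "good_rate_function X H \<longleftrightarrow>
     (\<forall>x\<in>topspace X. 0 \<le> H x) \<and>
     (\<forall>c::real. closedin X {x \<in> topspace X. H x \<le> ereal c} \<and>
                compactin X {x \<in> topspace X. H x \<le> ereal c})"

definition LDP :: "'a topology \<Rightarrow> (nat \<Rightarrow> 'a measure) \<Rightarrow> (nat \<Rightarrow> real) \<Rightarrow> ('a \<Rightarrow> ereal) \<Rightarrow> bool" where
  "LDP X P a H \<longleftrightarrow>
     (\<forall>U. openin X U \<longrightarrow>
        - (INF x\<in>U. H x) \<le> liminf (\<lambda>n. ereal (1 / a n) * elog (measure (P n) U))) \<and>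
     (\<forall>F. closedin X F \<longrightarrow>
        limsup (\<lambda>n. ereal (1 / a n) * elog (measure (P n) F)) \<le> - (INF x\<in>F. H x))"

definition real_gaussian :: "'w measure \<Rightarrow> ('w \<Rightarrow> real) \<Rightarrow> bool" where
  "real_gaussian M Y \<longleftrightarrow> Y \<in> borel_measurable M \<and>
     (\<exists>m s. (0 < s \<and> distributed M lborel Y (normal_density m s)) \<or> (AE \<omega> in M. Y \<omega> = m))"

definition jointly_gaussian :: "'w measure \<Rightarrow> ('i \<Rightarrow> 'w \<Rightarrow> real) \<Rightarrow> 'i set \<Rightarrow> bool" where
  "jointly_gaussian M X I \<longleftrightarrow>
     (\<forall>F c. finite F \<longrightarrow> F \<subseteq> I \<longrightarrow> real_gaussian M (\<lambda>\<omega>. \<Sum>i\<in>F. c i * X i \<omega>))"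

definition std_brownian :: "'w measure \<Rightarrow> real \<Rightarrow> ('w \<Rightarrow> real \<Rightarrow> real) \<Rightarrow> bool" where
  "std_brownian M T W \<longleftrightarrow>
     (\<forall>t\<in>{0..T}. (\<lambda>\<omega>. W \<omega> t) \<in> borel_measurable M) \<and>
     (\<forall>\<omega>\<in>space M. W \<omega> 0 = 0 \<and> continuous_on {0..T} (W \<omega>)) \<and>
     (\<forall>s t. 0 \<le> s \<longrightarrow> s < t \<longrightarrow> t \<le> T \<longrightarrow>
        distributed M lborel (\<lambda>\<omega>. W \<omega> t - W \<omega> s) (normal_density 0 (sqrt (t - s)))) \<and>
     (\<forall>ts :: real list. sorted_wrt (<) ts \<longrightarrow> set ts \<subseteq> {0..T} \<longrightarrow>
        prob_space.indep_vars M (\<lambda>_. borel)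
          (\<lambda>k \<omega>. W \<omega> (ts ! Suc k) - W \<omega> (ts ! k)) {..<length ts - 1})"

definition indep_noise :: "'w measure \<Rightarrow> real \<Rightarrow> int set \<Rightarrow> ('w \<Rightarrow> int \<times> int \<Rightarrow> real)
     \<Rightarrow> ('w \<Rightarrow> int \<Rightarrow> real \<Rightarrow> real) \<Rightarrow> bool" where
  "indep_noise M T I J B \<longleftrightarrow>
     (\<lambda>\<omega>. restrict (J \<omega>) (I \<times> I)) \<in> measurable M (Pi\<^sub>M (I \<times> I) (\<lambda>_. borel)) \<and>
     (\<lambda>\<omega>. \<lambda>i\<in>I. restrict (B \<omega> i) {0..T}) \<in> measurable M (Pi\<^sub>M I (\<lambda>_. Pi\<^sub>M {0..T} (\<lambda>_. borel))) \<and>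
     prob_space.indep_set M
       {(\<lambda>\<omega>. restrict (J \<omega>) (I \<times> I)) -` A \<inter> space M | A. A \<in> sets (Pi\<^sub>M (I \<times> I) (\<lambda>_. borel))}
       {(\<lambda>\<omega>. \<lambda>i\<in>I. restrict (B \<omega> i) {0..T}) -` A \<inter> space M
          | A. A \<in> sets (Pi\<^sub>M I (\<lambda>_. Pi\<^sub>M {0..T} (\<lambda>_. borel)))} \<and>
     prob_space.indep_vars M (\<lambda>_. Pi\<^sub>M {0..T} (\<lambda>_. borel)) (\<lambda>i \<omega>. restrict (B \<omega> i) {0..T}) I"

text \<open>R is the autocorrelation of a centered stationary Gaussian field on Z^2
  (realised, w.l.o.g., as the coordinate field on some probability space).\<close>
definition gaussian_field_autocorrelation :: "(int \<Rightarrow> int \<Rightarrow> real) \<Rightarrow> bool" where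
  "gaussian_field_autocorrelation R \<longleftrightarrow>
     (\<exists>P :: (int \<times> int \<Rightarrow> real) measure. prob_space P \<and>
        jointly_gaussian P (\<lambda>ij \<omega>. \<omega> ij) UNIV \<and>
        (\<forall>i j. (\<integral>\<omega>. \<omega> (i, j) \<partial>P) = 0) \<and>
        (\<forall>i j k l. (\<integral>\<omega>. \<omega> (i, j) * \<omega> (k, l) \<partial>P) = R (k - i) (l - j)))"

definition spectral_density :: "(int \<Rightarrow> int \<Rightarrow> real) \<Rightarrow> real \<Rightarrow> real \<Rightarrow> complex" where
  "spectral_density R \<phi>1 \<phi>2 =
     (\<Sum>\<^sub>\<infinity>(k, l)\<in>UNIV. complex_of_real (R k l) * exp (- \<i> * of_int k * of_real \<phi>1)
                                             * exp (- \<i> * of_int l * of_real \<phi>2))"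

end

theory Submission
  imports Defs
begin

lemma rate_pos:
  fixes X :: "'a topology" and H :: "'a \<Rightarrow> ereal"
  assumes good: "good_rate_function X H"
    and z: "x0 \<in> topspace X" "H x0 = 0" and uz: "\<forall>x\<in>topspace X. H x = 0 \<longrightarrow> x = x0"
    and F: "closedin X F" "x0 \<notin> F"
  shows "\<exists>c>0. \<forall>x\<in>F. ereal c \<le> H x"
proof (rule ccontr)
  assume "\<not> ?thesis"
  then have small: "\<And>c. c > 0 \<Longrightarrow> \<exists>x\<in>F. H x < ereal c" by (meson not_le)
  define L where "L m = {x \<in> topspace X. H x \<le> ereal (1 / Suc m)}" for m :: nat
  define K where "K = {x \<in> topspace X. H x \<le> ereal 1}"
  have nonneg: "\<And>x. x \<in> topspace X \<Longrightarrow> 0 \<le> H x" using good unfolding good_rate_function_def by blast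
  have cK: "compactin X K" using good unfolding good_rate_function_def K_def by blast
  have cL: "closedin X (L m)" for m using good unfolding good_rate_function_def L_def by blast
  have Ftop: "F \<subseteq> topspace X" using F closedin_subset by blast
  let ?U = "range (\<lambda>m. F \<inter> L m)"
  have "K \<inter> \<Inter>?U \<noteq> {}"
  proof (rule compactin_fip[THEN iffD1, OF cK, THEN conjunct2, rule_format], intro conjI allI impI)
    show "\<forall>C\<in>?U. closedin X C" using cL F by auto
    fix \<F> assume fin: "finite \<F> \<and> \<F> \<subseteq> ?U"
    then obtain Ms where Ms: "finite Ms" "\<F> = (\<lambda>m. F \<inter> L m) ` Ms"
      by (meson finite_subset_image)
    define N where "N = Max (insert 0 Ms)"
    have mN: "m \<in> Ms \<Longrightarrow> m \<le> N" for m using Ms(1) unfolding N_def by simp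
    obtain x where x: "x \<in> F" "H x < ereal (1 / Suc N)" using small[of "1 / Suc N"] by auto
    have xt: "x \<in> topspace X" using x Ftop by auto
    have "x \<in> L m" if "m \<in> Ms" for m
    proof -
      have "1 / real (Suc N) \<le> 1 / real (Suc m)" using mN[OF that] by (simp add: frac_le)
      then show ?thesis using x xt unfolding L_def by (auto intro: order.trans[OF less_imp_le])
    qed
    moreover have "x \<in> K"
    proof -
      have "1 / real (Suc N) \<le> 1" by simp
      then show ?thesis using x xt unfolding K_def by (auto intro: order.trans[OF less_imp_le])
    qed
    ultimately show "K \<inter> \<Inter>\<F> \<noteq> {}" using Ms x by auto
  qed
  then obtain x where x: "x \<in> F" "\<And>m. x \<in> L m" by auto
  have xt: "x \<in> topspace X" using x Ftop by auto
  have "H x \<le> 0"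
  proof (rule ccontr)
    assume "\<not> H x \<le> 0"
    then have pos: "H x > 0" by simp
    have "H x \<le> ereal 1" using x(2)[of 0] unfolding L_def by simp
    then obtain r where r: "H x = ereal r" "r > 0" using pos by (cases "H x") auto
    obtain m where "inverse (real (Suc m)) < r" using r(2) reals_Archimedean by blast
    then have "1 / real (Suc m) < r" by (simp add: divide_inverse)
    moreover have "r \<le> 1 / real (Suc m)" using x(2)[of m] r unfolding L_def by simp
    ultimately show False by simp
  qed
  then have "H x = 0" using nonneg[OF xt] by simp
  then have "x = x0" using uz xt by blast
  then show False using x F by simp
qed

lemma borel_of_space: "space (borel_of X) = topspace X"
  unfolding borel_of_def by (rule space_measure_of) (auto dest: openin_subset)

lemma borel_of_sets: "sets (borel_of X) = sigma_sets (topspace X) {U. openin X U}"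
  unfolding borel_of_def by (rule sets_measure_of) (auto dest: openin_subset)

lemma borel_of_open: "openin X U \<Longrightarrow> U \<in> sets (borel_of X)"
  unfolding borel_of_sets by auto

lemma borel_of_closed: "closedin X F \<Longrightarrow> F \<in> sets (borel_of X)"
proof -
  assume "closedin X F"
  then have "F = topspace X - (topspace X - F)" "openin X (topspace X - F)"
    by (auto simp: closedin_def)
  then show ?thesis
    by (metis borel_of_open borel_of_space sets.compl_sets)
qed

lemma distr_emeasure_pos:
  fixes M :: "'w measure" and N :: "'a measure"
  assumes "emeasure (distr M N f) A \<noteq> 0" "B \<in> sets N"
  shows "emeasure (distr M N f) B = emeasure M (f -` B \<inter> space M)"
proof -
  let ?mu = "\<lambda>A. emeasure M (f -` A \<inter> space M)"
  have eq: "emeasure (distr M N f) = (\<lambda>B. if B \<in> sigma_sets (space N) (sets N) \<and>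
       measure_space (space N) (sigma_sets (space N) (sets N)) ?mu then ?mu B else 0)"
    unfolding distr_def by (rule emeasure_measure_of_conv)
  have ms: "measure_space (space N) (sigma_sets (space N) (sets N)) ?mu"
    using assms(1) unfolding eq by (auto split: if_splits)
  show ?thesis using ms assms(2) unfolding eq by (simp add: sets.sigma_sets_eq)
qed

lemma ldp_bc:
  fixes X :: "'a topology" and Y :: "nat \<Rightarrow> 'w \<Rightarrow> 'a" and M :: "'w measure" and H :: "'a \<Rightarrow> ereal"
  assumes M: "prob_space M"
    and Y: "\<And>n \<omega>. \<omega> \<in> space M \<Longrightarrow> Y n \<omega> \<in> topspace X"
    and LDP: "LDP X (\<lambda>n. distr M (borel_of X) (Y n)) (\<lambda>n. real (Nn n)) H"
    and good: "good_rate_function X H"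
    and z: "x0 \<in> topspace X" "H x0 = 0" and uz: "\<forall>x\<in>topspace X. H x = 0 \<longrightarrow> x = x0"
    and F: "closedin X F" "x0 \<notin> F"
  shows "AE \<omega> in M. eventually (\<lambda>n. Y n \<omega> \<notin> F) sequentially"
proof -
  interpret prob_space M by fact
  obtain c where c: "c > 0" "\<And>x. x \<in> F \<Longrightarrow> ereal c \<le> H x"
    using rate_pos[OF good z uz F] by blast
  define P where "P n = distr M (borel_of X) (Y n)" for n
  define g where "g n = ereal (1 / real (Nn n)) * elog (measure (P n) F)" for n
  define h where "h n = ereal (1 / real (Nn n)) * elog (measure (P n) (topspace X))" for n
  have nonneg: "\<And>x. x \<in> topspace X \<Longrightarrow> 0 \<le> H x" using good unfolding good_rate_function_def by blast
  have "limsup g \<le> - (INF x\<in>F. H x)"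
    using LDP F(1) unfolding LDP_def g_def P_def by blast
  also have "\<dots> \<le> - ereal c"
  proof -
    have "ereal c \<le> (INF x\<in>F. H x)" using c(2) by (rule INF_greatest)
    then show ?thesis by (metis ereal_minus_le_minus uminus_ereal.simps(1))
  qed
  also have "\<dots> < - ereal (c/2)" using c(1) by simp
  finally have ev1: "eventually (\<lambda>n. g n < - ereal (c/2)) sequentially"
    by (rule Limsup_lessD)
  have INF0: "(INF x\<in>topspace X. H x) = 0"
    by (rule antisym, rule INF_lower2[OF z(1)], simp add: z, rule INF_greatest, simp add: nonneg)
  have "- (INF x\<in>topspace X. H x) \<le> liminf h"
    using LDP unfolding LDP_def h_def P_def by blast
  then have "-1 < liminf h" unfolding INF0 by (simp add: order.strict_trans2[of _ 0])
  then have ev2: "eventually (\<lambda>n. h n > -1) sequentially" by (rule less_LiminfD)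
  have key: "Y n -` F \<inter> space M \<in> sets M \<and> measure M (Y n -` F \<inter> space M) \<le> exp (- real (Nn n) * c / 2)"
    if g1: "g n < - ereal (c/2)" and h1: "h n > -1" for n
  proof -
    have "measure (P n) (topspace X) \<noteq> 0"
    proof
      assume "measure (P n) (topspace X) = 0"
      then have "h n = - \<infinity>" unfolding h_def elog_def by (simp add: Nn_def)
      then show False using h1 by simp
    qed
    then have ne: "emeasure (P n) (topspace X) \<noteq> 0" by (auto simp: measure_def)
    have em: "\<And>B. B \<in> sets (borel_of X) \<Longrightarrow> emeasure (P n) B = emeasure M (Y n -` B \<inter> space M)"
      using distr_emeasure_pos[OF ne[unfolded P_def]] unfolding P_def by blast
    define Op where "Op = topspace X - F"
    have Oo: "openin X Op" using F(1) unfolding Op_def by (simp add: closedin_def)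
    have Fs: "F \<in> sets (borel_of X)" by (rule borel_of_closed[OF F(1)])
    have Os: "Op \<in> sets (borel_of X)" by (rule borel_of_open[OF Oo])
    have Ftop: "F \<subseteq> topspace X" using F(1) closedin_subset by blast
    have Ts: "topspace X \<in> sets (borel_of X)" by (rule borel_of_open) simp
    have sP: "sets (P n) = sets (borel_of X)" unfolding P_def by simp
    have "emeasure (P n) F + emeasure (P n) Op = emeasure (P n) (F \<union> Op)"
      by (rule plus_emeasure) (use Fs Os in \<open>auto simp: sP Op_def\<close>)
    also have "F \<union> Op = topspace X" using Ftop unfolding Op_def by auto
    also have "emeasure (P n) (topspace X) = emeasure M (space M)"
      using em[OF Ts] Y by (metis Int_absorb1 subsetI vimageI2 vimage_eq)
    also have "\<dots> = 1" by (simp add: emeasure_space_1)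
    finally have sum1: "emeasure M (Y n -` F \<inter> space M) + emeasure M (Y n -` Op \<inter> space M) = 1"
      using em[OF Fs] em[OF Os] by simp
    have Gs: "Y n -` F \<inter> space M \<in> sets M"
    proof (rule ccontr)
      assume nG: "Y n -` F \<inter> space M \<notin> sets M"
      then have "emeasure M (Y n -` Op \<inter> space M) = 1"
        using sum1 by (simp add: emeasure_notin_sets)
      then have "Y n -` Op \<inter> space M \<in> sets M" using emeasure_notin_sets by fastforce
      then have "space M - (Y n -` Op \<inter> space M) \<in> sets M" by blast
      moreover have "space M - (Y n -` Op \<inter> space M) = Y n -` F \<inter> space M"
        using Y Ftop unfolding Op_def by auto
      ultimately show False using nG by simp
    qed
    have mP: "measure (P n) F = measure M (Y n -` F \<inter> space M)"
      using em[OF Fs] by (simp add: measure_def)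
    have Npos: "real (Nn n) > 0" by (simp add: Nn_def)
    have bound: "measure M (Y n -` F \<inter> space M) \<le> exp (- real (Nn n) * c / 2)"
    proof (cases "measure M (Y n -` F \<inter> space M) = 0")
      case True
      have "0 \<le> exp (- real (Nn n) * c / 2)" by simp
      then show ?thesis using True by linarith
    next
      case False
      let ?m = "measure M (Y n -` F \<inter> space M)"
      have mpos: "?m > 0" using False measure_nonneg[of M "Y n -` F \<inter> space M"] by linarith
      have "g n = ereal (ln ?m / real (Nn n))"
        unfolding g_def elog_def mP using False by simp
      then have "ln ?m / real (Nn n) < - (c/2)" using g1 by simp
      then have "ln ?m < - real (Nn n) * c / 2" using Npos by (simp add: field_simps)
      then have "exp (ln ?m) < exp (- real (Nn n) * c / 2)" by simp
      then show ?thesis using mpos by simp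
    qed
    show ?thesis using Gs bound by blast
  qed
  obtain n0 where n0: "\<And>n. n \<ge> n0 \<Longrightarrow> g n < - ereal (c/2) \<and> h n > -1"
    using eventually_conj[OF ev1 ev2] unfolding eventually_sequentially by blast
  define A where "A n = (if n \<ge> n0 then Y n -` F \<inter> space M else {})" for n
  have As: "A n \<in> sets M" for n using key n0 unfolding A_def by auto
  have Ab: "measure M (A n) \<le> exp (- c) ^ n" for n
  proof -
    have "exp (- real (Nn n) * c / 2) \<le> exp (- c) ^ n"
      using c(1) by (simp add: Nn_def exp_of_nat_mult[symmetric] field_simps)
    then show ?thesis using key n0 unfolding A_def by (auto intro: order.trans)
  qed
  have summ: "summable (\<lambda>n. measure M (A n))"
    by (rule summable_comparison_test[of _ "\<lambda>n. exp (- c) ^ n"])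
       (use Ab c(1) in \<open>auto intro!: summable_geometric\<close>)
  have "AE \<omega> in M. eventually (\<lambda>n. \<omega> \<in> space M - A n) sequentially"
    by (rule borel_cantelli_AE1[OF As]) (simp_all add: emeasure_eq_measure summ)
  then show ?thesis
  proof (rule AE_mp[OF _ AE_I2], intro impI)
    fix \<omega> assume \<omega>: "\<omega> \<in> space M" and ev: "eventually (\<lambda>n. \<omega> \<in> space M - A n) sequentially"
    show "eventually (\<lambda>n. Y n \<omega> \<notin> F) sequentially"
      using eventually_conj[OF ev eventually_ge_at_top[of n0]]
      by eventually_elim (use \<omega> in \<open>auto simp: A_def\<close>)
  qed
qed

lemma cont_borel_of_measurable:
  assumes "continuous_map X euclideanreal \<phi>"
  shows "\<phi> \<in> borel_measurable (borel_of X)"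
proof (rule borel_measurableI)
  fix S :: "real set" assume "open S"
  then have "openin X {x \<in> topspace X. \<phi> x \<in> S}"
    using assms by (simp add: continuous_map_def)
  moreover have "\<phi> -` S \<inter> space (borel_of X) = {x \<in> topspace X. \<phi> x \<in> S}"
    by (auto simp: borel_of_space)
  ultimately show "\<phi> -` S \<inter> space (borel_of X) \<in> sets (borel_of X)"
    by (simp add: borel_of_open)
qed

lemma cont_map_measurable:
  assumes "continuous_map X Y f"
  shows "f \<in> measurable (borel_of X) (borel_of Y)"
proof -
  have "f \<in> measurable (borel_of X) (sigma (topspace Y) {U. openin Y U})"
  proof (rule measurable_measure_of)
    show "f \<in> space (borel_of X) \<rightarrow> topspace Y"
      using assms by (auto simp: borel_of_space continuous_map_def)
    show "{U. openin Y U} \<subseteq> Pow (topspace Y)" by (auto dest: openin_subset)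
    fix A assume "A \<in> {U. openin Y U}"
    then have "openin X {x \<in> topspace X. f x \<in> A}"
      using assms by (simp add: continuous_map_def)
    moreover have "f -` A \<inter> space (borel_of X) = {x \<in> topspace X. f x \<in> A}"
      by (auto simp: borel_of_space)
    ultimately show "f -` A \<inter> space (borel_of X) \<in> sets (borel_of X)"
      by (simp add: borel_of_open)
  qed
  then show ?thesis unfolding borel_of_def .
qed

lemma bcont_integrable:
  assumes nu: "prob_space \<nu>" "sets \<nu> = sets (borel_of X)"
    and c: "continuous_map X euclideanreal \<phi>" and B: "\<And>x. x \<in> topspace X \<Longrightarrow> \<bar>\<phi> x\<bar> \<le> B"
  shows "integrable \<nu> \<phi>" "\<phi> \<in> borel_measurable \<nu>"
proof -
  interpret prob_space \<nu> by fact
  have sp: "space \<nu> = topspace X"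
    using sets_eq_imp_space_eq[OF nu(2)] by (simp add: borel_of_space)
  show m: "\<phi> \<in> borel_measurable \<nu>"
    using cont_borel_of_measurable[OF c] measurable_cong_sets[OF nu(2) refl] by blast
  show "integrable \<nu> \<phi>"
    by (rule integrable_const_bound[where B=B]) (use B sp m in auto)
qed

lemma portmanteau_lower:
  fixes X :: "'a topology" and D :: "('a \<Rightarrow> real) set"
  assumes cD: "countable D" and Dc: "\<And>\<psi>. \<psi> \<in> D \<Longrightarrow> continuous_map X euclideanreal \<psi>"
    and D_max: "\<And>\<psi>1 \<psi>2. \<psi>1 \<in> D \<Longrightarrow> \<psi>2 \<in> D \<Longrightarrow> (\<lambda>x. max (\<psi>1 x) (\<psi>2 x)) \<in> D"
    and D_nonneg: "\<And>\<psi> x. \<psi> \<in> D \<Longrightarrow> x \<in> topspace X \<Longrightarrow> 0 \<le> \<psi> x"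
    and D_zero: "(\<lambda>x. 0) \<in> D"
    and D_approx: "\<And>\<phi> x q. continuous_map X euclideanreal \<phi> \<Longrightarrow> (\<forall>y\<in>topspace X. 0 \<le> \<phi> y)
        \<Longrightarrow> x \<in> topspace X \<Longrightarrow> q \<in> \<rat> \<Longrightarrow> 0 < q \<Longrightarrow> q < \<phi> x
        \<Longrightarrow> \<exists>\<psi>\<in>D. (\<forall>y\<in>topspace X. \<psi> y \<le> \<phi> y) \<and> q \<le> \<psi> x"
    and nu: "\<And>n. prob_space (\<nu> n)" "\<And>n. sets (\<nu> n) = sets (borel_of X)"
    and mu: "prob_space \<mu>" "sets \<mu> = sets (borel_of X)"
    and conv: "\<And>\<psi>. \<psi> \<in> D \<Longrightarrow> (\<lambda>n. \<integral>x. \<psi> x \<partial>\<nu> n) \<longlonglongrightarrow> (\<integral>x. \<psi> x \<partial>\<mu>)"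
    and phi: "continuous_map X euclideanreal \<phi>" and B: "\<And>x. x \<in> topspace X \<Longrightarrow> \<bar>\<phi> x\<bar> \<le> B"
    and e: "e > 0"
  shows "eventually (\<lambda>n. (\<integral>x. \<phi> x \<partial>\<nu> n) > (\<integral>x. \<phi> x \<partial>\<mu>) - e) sequentially"
proof -
  define \<phi>' where "\<phi>' x = \<phi> x + B" for x
  have c': "continuous_map X euclideanreal \<phi>'"
    unfolding \<phi>'_def by (intro continuous_intros phi)
  have nn': "\<forall>y\<in>topspace X. 0 \<le> \<phi>' y" using B unfolding \<phi>'_def by (smt (verit))
  have B': "\<And>x. x \<in> topspace X \<Longrightarrow> \<bar>\<phi>' x\<bar> \<le> 2 * B"
    using B unfolding \<phi>'_def by (smt (verit))
  define D' where "D' = {\<psi>\<in>D. \<forall>y\<in>topspace X. \<psi> y \<le> \<phi>' y}"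
  have D'ne: "D' \<noteq> {}" using D_zero nn' unfolding D'_def by auto
  have cD': "countable D'" using cD unfolding D'_def by simp
  define en where "en = from_nat_into D'"
  have enD: "en i \<in> D'" for i using from_nat_into[OF D'ne] unfolding en_def by blast
  have enall: "\<psi> \<in> D' \<Longrightarrow> \<exists>i. en i = \<psi>" for \<psi>
    using range_from_nat_into[OF D'ne cD'] unfolding en_def by (metis rangeE)
  define s where "s k x = (MAX i\<in>{..k}. en i x)" for k x
  have s_Suc: "s (Suc k) = (\<lambda>x. max (s k x) (en (Suc k) x))" for k
    unfolding s_def by (auto simp: atMost_Suc max.commute)
  have s0: "s 0 = en 0" unfolding s_def by auto
  have sD: "s k \<in> D" for k
    by (induction k) (use enD D'_def D_max in \<open>auto simp: s0 s_Suc\<close>)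
  have s_le: "s k x \<le> \<phi>' x" if "x \<in> topspace X" for k x
    using enD that unfolding s_def D'_def by (auto simp: Max_le_iff)
  have s_ge: "en i x \<le> s k x" if "i \<le> k" for i k x
    unfolding s_def by (rule Max_ge) (use that in auto)
  have s_nn: "0 \<le> s k x" if "x \<in> topspace X" for k x
    using D_nonneg[OF sD that] .
  have slim: "(\<lambda>k. s k x) \<longlonglongrightarrow> \<phi>' x" if x: "x \<in> topspace X" for x
  proof (rule LIMSEQ_I)
    fix r :: real assume r: "r > 0"
    show "\<exists>no. \<forall>k\<ge>no. norm (s k x - \<phi>' x) < r"
    proof (cases "\<phi>' x = 0")
      case True
      then have "s k x = 0" for k using s_le[OF x, of k] s_nn[OF x, of k] by simp
      then show ?thesis using True r by auto
    next
      case False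
      then have pos: "\<phi>' x > 0" using nn' x by (metis less_eq_real_def)
      obtain q where q: "q \<in> \<rat>" "max 0 (\<phi>' x - r) < q" "q < \<phi>' x"
        using Rats_dense_in_real[of "max 0 (\<phi>' x - r)" "\<phi>' x"] pos r by auto
      obtain \<psi> where \<psi>: "\<psi> \<in> D" "\<forall>y\<in>topspace X. \<psi> y \<le> \<phi>' y" "q \<le> \<psi> x"
        using D_approx[OF c' nn' x q(1) _ q(3)] q(2) by auto
      obtain i where i: "en i = \<psi>" using enall[of \<psi>] \<psi> unfolding D'_def by auto
      show ?thesis
      proof (intro exI allI impI)
        fix k assume "i \<le> k"
        then have "q \<le> s k x" using s_ge[of i k x] i \<psi>(3) by simp
        then show "norm (s k x - \<phi>' x) < r" using s_le[OF x, of k] q(2) by auto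
      qed
    qed
  qed
  interpret mu: prob_space \<mu> by fact
  have spmu: "space \<mu> = topspace X"
    using sets_eq_imp_space_eq[OF mu(2)] by (simp add: borel_of_space)
  have m': "\<phi>' \<in> borel_measurable \<mu>" using bcont_integrable[OF mu c' B'] by blast
  have ms: "s k \<in> borel_measurable \<mu>" for k
  proof -
    obtain C where "\<And>x. x \<in> topspace X \<Longrightarrow> \<bar>s k x\<bar> \<le> C"
      using s_le s_nn B' by (metis abs_of_nonneg order.trans abs_ge_self)
    then show ?thesis using bcont_integrable[OF mu Dc[OF sD]] by blast
  qed
  have ib: "\<And>x. x \<in> topspace X \<Longrightarrow> \<bar>s k x\<bar> \<le> 2 * B" for k
  proof -
    fix x assume x: "x \<in> topspace X"
    have "\<bar>s k x\<bar> = s k x" using s_nn[OF x] by simp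
    also have "\<dots> \<le> \<phi>' x" by (rule s_le[OF x])
    also have "\<dots> \<le> 2 * B" using B'[OF x] by simp
    finally show "\<bar>s k x\<bar> \<le> 2 * B" .
  qed
  have lim_mu: "(\<lambda>k. \<integral>x. s k x \<partial>\<mu>) \<longlonglongrightarrow> (\<integral>x. \<phi>' x \<partial>\<mu>)"
  proof (rule integral_dominated_convergence[where w="\<lambda>_. 2 * B"])
    show "\<phi>' \<in> borel_measurable \<mu>" by fact
    show "s k \<in> borel_measurable \<mu>" for k by fact
    show "integrable \<mu> (\<lambda>_. 2 * B)" by simp
    show "AE x in \<mu>. (\<lambda>k. s k x) \<longlonglongrightarrow> \<phi>' x" using slim by (intro AE_I2) (simp add: spmu)
    show "AE x in \<mu>. norm (s k x) \<le> 2 * B" for k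
      using ib by (auto simp: spmu intro!: AE_I2)
  qed
  obtain k where k: "(\<integral>x. s k x \<partial>\<mu>) > (\<integral>x. \<phi>' x \<partial>\<mu>) - e/2"
  proof -
    have "eventually (\<lambda>k. dist (\<integral>x. s k x \<partial>\<mu>) (\<integral>x. \<phi>' x \<partial>\<mu>) < e/2) sequentially"
      using lim_mu e unfolding tendsto_iff by (metis half_gt_zero)
    then obtain k where "dist (\<integral>x. s k x \<partial>\<mu>) (\<integral>x. \<phi>' x \<partial>\<mu>) < e/2"
      by (meson eventually_sequentially order.refl)
    then show ?thesis using that unfolding dist_real_def by (smt (verit))
  qed
  have "eventually (\<lambda>n. dist (\<integral>x. s k x \<partial>\<nu> n) (\<integral>x. s k x \<partial>\<mu>) < e/2) sequentially"
    using conv[OF sD] e unfolding tendsto_iff by (metis half_gt_zero)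
  then show ?thesis
  proof (rule eventually_mono)
    fix n assume n: "dist (\<integral>x. s k x \<partial>\<nu> n) (\<integral>x. s k x \<partial>\<mu>) < e/2"
    interpret nun: prob_space "\<nu> n" by (rule nu)
    have spn: "space (\<nu> n) = topspace X"
      using sets_eq_imp_space_eq[OF nu(2)] by (simp add: borel_of_space)
    have i1: "integrable (\<nu> n) (s k)" using bcont_integrable[OF nu(1) nu(2) Dc[OF sD] ib] by blast
    have i2: "integrable (\<nu> n) \<phi>" using bcont_integrable[OF nu(1) nu(2) phi B] by blast
    have i2': "integrable (\<nu> n) \<phi>'" using bcont_integrable[OF nu(1) nu(2) c' B'] by blast
    have "(\<integral>x. s k x \<partial>\<nu> n) \<le> (\<integral>x. \<phi>' x \<partial>\<nu> n)"
      by (rule integral_mono[OF i1 i2']) (use s_le spn in auto)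
    also have "(\<integral>x. \<phi>' x \<partial>\<nu> n) = (\<integral>x. \<phi> x \<partial>\<nu> n) + B"
      unfolding \<phi>'_def using i2 by (simp add: nun.prob_space)
    finally have a: "(\<integral>x. s k x \<partial>\<nu> n) \<le> (\<integral>x. \<phi> x \<partial>\<nu> n) + B" .
    have i3: "integrable \<mu> \<phi>" using bcont_integrable[OF mu phi B] by blast
    have b: "(\<integral>x. \<phi>' x \<partial>\<mu>) = (\<integral>x. \<phi> x \<partial>\<mu>) + B"
      unfolding \<phi>'_def using i3 by (simp add: mu.prob_space)
    show "(\<integral>x. \<phi> x \<partial>\<nu> n) > (\<integral>x. \<phi> x \<partial>\<mu>) - e"
      using a b k n unfolding dist_real_def abs_less_iff by linarith
  qed
qed

lemma openin_mtopology_of_ball: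
  assumes "openin (mtopology_of m) U" "x \<in> U"
  shows "\<exists>r>0. \<forall>y\<in>mspace m. mdist m x y < r \<longrightarrow> y \<in> U"
proof -
  have Um: "U \<subseteq> mspace m" and "(\<forall>x. x \<in> U \<longrightarrow> (\<exists>r>0. Metric_space.mball (mspace m) (mdist m) x r \<subseteq> U))"
    using assms(1) Metric_space.openin_mtopology[OF Metric_space_mspace_mdist, of m]
    unfolding mtopology_of_def by blast+
  then obtain r where "r > 0" "Metric_space.mball (mspace m) (mdist m) x r \<subseteq> U"
    using assms(2) by blast
  show ?thesis
  proof (intro exI[of _ r] conjI ballI impI)
    show "r > 0" by fact
    fix y assume y: "y \<in> mspace m" "mdist m x y < r"
    have "x \<in> mspace m" using assms(2) Um by auto
    then have "y \<in> Metric_space.mball (mspace m) (mdist m) x r"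
      using y by (simp add: Metric_space.in_mball[OF Metric_space_mspace_mdist])
    then show "y \<in> U" using \<open>Metric_space.mball (mspace m) (mdist m) x r \<subseteq> U\<close> by blast
  qed
qed

definition tent :: "'b metric \<Rightarrow> int \<Rightarrow> 'b \<Rightarrow> rat \<Rightarrow> (int \<Rightarrow> 'b) \<Rightarrow> real" where
  "tent m j c r u = max 0 (min 1 (2 - (2 / real_of_rat r) * mdist m (u j) c))"

definition hL :: "'b metric \<Rightarrow> (int \<times> 'b \<times> rat) list \<Rightarrow> (int \<Rightarrow> 'b) \<Rightarrow> real" where
  "hL m L u = foldr (\<lambda>(j, c, r) acc. min (tent m j c r u) acc) L 1"

definition D0 :: "'b metric \<Rightarrow> 'b set \<Rightarrow> ((int \<Rightarrow> 'b) \<Rightarrow> real) set" where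
  "D0 m C = (\<lambda>(q, L). (\<lambda>u. real_of_rat q * hL m L u)) `
      {(q, L). q > 0 \<and> L \<in> lists (UNIV \<times> C \<times> {r. r > 0})}"

definition fmax :: "((int \<Rightarrow> 'b) \<Rightarrow> real) list \<Rightarrow> (int \<Rightarrow> 'b) \<Rightarrow> real" where
  "fmax Ps u = foldr (\<lambda>\<psi> acc. max (\<psi> u) acc) Ps 0"

definition DD :: "'b metric \<Rightarrow> 'b set \<Rightarrow> ((int \<Rightarrow> 'b) \<Rightarrow> real) set" where
  "DD m C = fmax ` lists (D0 m C)"

lemma tent_range: "0 \<le> tent m j c r u" "tent m j c r u \<le> 1"
  unfolding tent_def by auto


lemma hL_range: "0 \<le> hL m L u" "hL m L u \<le> 1"
  unfolding hL_def by (induction L) (auto simp: tent_range)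
lemma hL_le: "(j, c, r) \<in> set L \<Longrightarrow> hL m L u \<le> tent m j c r u"
  unfolding hL_def by (induction L) auto

lemma hL_ge: "t \<le> 1 \<Longrightarrow> (\<And>j c r. (j, c, r) \<in> set L \<Longrightarrow> t \<le> tent m j c r u) \<Longrightarrow> t \<le> hL m L u"
  unfolding hL_def by (induction L) auto

lemma fmax_nonneg: "0 \<le> fmax Ps u"
  unfolding fmax_def by (induction Ps) auto

lemma fmax_gen: "0 \<le> a \<Longrightarrow> foldr (\<lambda>\<psi> acc. max (\<psi> u) acc) Ps a = max (fmax Ps u) a"
  unfolding fmax_def by (induction Ps) (auto simp: max.assoc)

lemma fmax_append: "fmax (Ps1 @ Ps2) = (\<lambda>u. max (fmax Ps1 u) (fmax Ps2 u))"
proof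
  fix u
  have "fmax (Ps1 @ Ps2) u = foldr (\<lambda>\<psi> acc. max (\<psi> u) acc) Ps1 (fmax Ps2 u)"
    by (simp add: fmax_def)
  also have "\<dots> = max (fmax Ps1 u) (fmax Ps2 u)" by (rule fmax_gen[OF fmax_nonneg])
  finally show "fmax (Ps1 @ Ps2) u = max (fmax Ps1 u) (fmax Ps2 u)" .
qed

lemma DD_max: "\<psi>1 \<in> DD m C \<Longrightarrow> \<psi>2 \<in> DD m C \<Longrightarrow> (\<lambda>x. max (\<psi>1 x) (\<psi>2 x)) \<in> DD m C"
proof -
  assume "\<psi>1 \<in> DD m C" "\<psi>2 \<in> DD m C"
  then obtain P1 P2 where "P1 \<in> lists (D0 m C)" "P2 \<in> lists (D0 m C)" "\<psi>1 = fmax P1" "\<psi>2 = fmax P2"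
    unfolding DD_def by blast
  then have "(\<lambda>x. max (\<psi>1 x) (\<psi>2 x)) = fmax (P1 @ P2)" "P1 @ P2 \<in> lists (D0 m C)"
    by (simp_all add: fmax_append)
  then show ?thesis unfolding DD_def by blast
qed

lemma DD_nonneg: "\<psi> \<in> DD m C \<Longrightarrow> 0 \<le> \<psi> x"
  unfolding DD_def using fmax_nonneg by blast

lemma DD_zero: "(\<lambda>x. 0) \<in> DD m C"
  unfolding DD_def by (rule image_eqI[where x="[]"]) (auto simp: fmax_def)

lemma D0_elim:
  assumes "\<psi> \<in> D0 m C"
  obtains q L where "q > 0" "L \<in> lists (UNIV \<times> C \<times> {r. r > 0})" "\<psi> = (\<lambda>u. real_of_rat q * hL m L u)"
proof -
  from assms obtain p where p: "p \<in> {(q, L). q > 0 \<and> L \<in> lists (UNIV \<times> C \<times> {r. r > 0})}"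
      "\<psi> = (\<lambda>(q, L). (\<lambda>u. real_of_rat q * hL m L u)) p"
    unfolding D0_def by (rule imageE)
  obtain q L where "p = (q, L)" by (cases p)
  then show ?thesis using p by (intro that[of q L]) auto
qed

lemma D0_nonneg: "\<psi> \<in> D0 m C \<Longrightarrow> 0 \<le> \<psi> x"
proof -
  assume "\<psi> \<in> D0 m C"
  then obtain q L where "q > 0" "\<psi> = (\<lambda>u. real_of_rat q * hL m L u)" by (rule D0_elim)
  then show ?thesis using hL_range(1)[of m L x] by simp
qed

lemma D0_DD: "\<psi> \<in> D0 m C \<Longrightarrow> \<psi> \<in> DD m C"
  unfolding DD_def by (rule image_eqI[where x="[\<psi>]"]) (auto simp: fmax_def D0_nonneg)

lemma countable_DD:
  assumes "countable C"
  shows "countable (DD m C)"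
proof -
  have "countable ((UNIV::int set) \<times> C \<times> {r::rat. r > 0})"
    using assms by (intro countable_SIGMA) (auto intro: countableI_type)
  then have "countable (lists ((UNIV::int set) \<times> C \<times> {r::rat. r > 0}))" by (rule countable_lists)
  have "countable {(q::rat, L). q > 0 \<and> L \<in> lists ((UNIV::int set) \<times> C \<times> {r::rat. r > 0})}"
  proof (rule countable_subset)
    show "{(q::rat, L). q > 0 \<and> L \<in> lists ((UNIV::int set) \<times> C \<times> {r::rat. r > 0})}
       \<subseteq> (UNIV::rat set) \<times> lists ((UNIV::int set) \<times> C \<times> {r::rat. r > 0})" by auto
    show "countable ((UNIV::rat set) \<times> lists ((UNIV::int set) \<times> C \<times> {r::rat. r > 0}))"
      using \<open>countable (lists ((UNIV::int set) \<times> C \<times> {r::rat. r > 0}))\<close>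
      by (intro countable_SIGMA) (auto intro: countableI_type)
  qed
  then have "countable (D0 m C)" unfolding D0_def by (rule countable_image)
  then have "countable (lists (D0 m C))" by (rule countable_lists)
  then show ?thesis unfolding DD_def by (rule countable_image)
qed

context
  fixes m :: "'b metric"
begin

abbreviation "PX \<equiv> product_topology (\<lambda>_::int. mtopology_of m) UNIV"

lemma tent_cont:
  assumes "c \<in> mspace m"
  shows "continuous_map PX euclideanreal (tent m j c r)"
proof -
  have "continuous_map PX euclideanreal (\<lambda>u. mdist m (u j) c)"
  proof (rule continuous_map_mdist)
    show "continuous_map PX (mtopology_of m) (\<lambda>u. u j)"
      by (rule continuous_map_product_projection) simp
    show "continuous_map PX (mtopology_of m) (\<lambda>u. c)"
      using assms by simp
  qed
  then have g: "continuous_map PX euclideanreal g" if "g = (\<lambda>u. mdist m (u j) c)" for g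
    using that by simp
  have "continuous_map PX euclideanreal (\<lambda>u. max 0 (min 1 (2 - (2 / real_of_rat r) * g u)))"
    if "g = (\<lambda>u. mdist m (u j) c)" for g
    by (intro continuous_intros g[OF that])
  then show ?thesis unfolding tent_def by blast
qed

lemma hL_cont:
  assumes "L \<in> lists (UNIV \<times> C \<times> {r. r > 0})" "C \<subseteq> mspace m"
  shows "continuous_map PX euclideanreal (hL m L)"
  using assms(1)
proof (induction L)
  case Nil then show ?case by (simp add: hL_def)
next
  case (Cons a L)
  obtain j c r where a: "a = (j, c, r)" by (cases a) auto
  have eq: "hL m (a # L) = (\<lambda>u. min (tent m j c r u) (hL m L u))"
    by (rule ext) (simp add: hL_def a)
  show ?case unfolding eq using Cons assms(2) a by (intro continuous_intros tent_cont) auto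
qed

lemma fmax_cont:
  assumes "C \<subseteq> mspace m"
  shows "Ps \<in> lists (D0 m C) \<Longrightarrow> continuous_map PX euclideanreal (fmax Ps)"
proof (induction Ps)
  case Nil then show ?case by (simp add: fmax_def)
next
  case (Cons p Ps)
  have eq: "fmax (p # Ps) = (\<lambda>u. max (p u) (fmax Ps u))" by (rule ext) (simp add: fmax_def)
  have pD: "p \<in> D0 m C" and PsD: "Ps \<in> lists (D0 m C)" using Cons.prems by auto
  obtain q L where qL: "L \<in> lists (UNIV \<times> C \<times> {r. r > 0})" "p = (\<lambda>u. real_of_rat q * hL m L u)"
    using pD by (rule D0_elim)
  have "continuous_map PX euclideanreal p"
    unfolding qL(2) by (intro continuous_intros hL_cont[OF qL(1) assms(1)])
  then show ?case unfolding eq using Cons.IH[OF PsD] by (intro continuous_intros)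
qed

lemma DD_cont:
  assumes "C \<subseteq> mspace m" "\<psi> \<in> DD m C"
  shows "continuous_map PX euclideanreal \<psi>"
proof -
  obtain Ps where Ps: "Ps \<in> lists (D0 m C)" "\<psi> = fmax Ps" using assms(2) unfolding DD_def by (rule imageE)
  show ?thesis using fmax_cont[OF assms(1) Ps(1)] Ps(2) by simp
qed

lemma DD_approx:
  assumes C: "C \<subseteq> mspace m" and dense: "\<And>x e. x \<in> mspace m \<Longrightarrow> e > 0 \<Longrightarrow> \<exists>c\<in>C. mdist m x c < e"
    and phi: "continuous_map PX euclideanreal \<phi>" and nn: "\<forall>y\<in>topspace PX. 0 \<le> \<phi> y"
    and x: "x \<in> topspace PX" and q: "q \<in> \<rat>" "0 < q" "q < \<phi> x"
  shows "\<exists>\<psi>\<in>DD m C. (\<forall>y\<in>topspace PX. \<psi> y \<le> \<phi> y) \<and> q \<le> \<psi> x"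
proof -
  define Op where "Op = {y \<in> topspace PX. \<phi> y \<in> {q<..}}"
  have oO: "openin PX Op" unfolding Op_def
    by (rule openin_continuous_map_preimage[OF phi]) simp
  have xO: "x \<in> Op" using x q unfolding Op_def by auto
  have "\<forall>x \<in> Op. \<exists>U. finite {i \<in> UNIV. U i \<noteq> topspace (mtopology_of m)} \<and>
                 (\<forall>i \<in> UNIV. openin (mtopology_of m) (U i)) \<and> x \<in> Pi\<^sub>E UNIV U \<and> Pi\<^sub>E UNIV U \<subseteq> Op"
    using oO by (simp only: openin_product_topology_alt)
  from bspec[OF this xO] obtain U where U0: "finite {i \<in> UNIV. U i \<noteq> topspace (mtopology_of m)} \<and>
                 (\<forall>i \<in> UNIV. openin (mtopology_of m) (U i)) \<and> x \<in> Pi\<^sub>E UNIV U \<and> Pi\<^sub>E UNIV U \<subseteq> Op"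
    by (elim exE)
  have U: "finite {i. U i \<noteq> mspace m}" "\<And>i. openin (mtopology_of m) (U i)"
      "x \<in> Pi\<^sub>E UNIV U" "Pi\<^sub>E UNIV U \<subseteq> Op"
    using U0 by simp_all
  define J where "J = {i. U i \<noteq> mspace m}"
  have xi: "x i \<in> mspace m" for i using x by auto
  have "\<exists>r>0. \<forall>y\<in>mspace m. mdist m (x i) y < r \<longrightarrow> y \<in> U i" for i
  proof -
    have "x i \<in> U i" using U(3) by (simp add: PiE_iff)
    then show ?thesis by (rule openin_mtopology_of_ball[OF U(2)])
  qed
  then have "\<forall>i. \<exists>r. r > 0 \<and> (\<forall>y\<in>mspace m. mdist m (x i) y < r \<longrightarrow> y \<in> U i)" by blast
  from choice[OF this] obtain ep where ep0: "\<forall>i. ep i > 0 \<and> (\<forall>y\<in>mspace m. mdist m (x i) y < ep i \<longrightarrow> y \<in> U i)"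
    by (elim exE)
  have ep: "\<And>i. ep i > 0" "\<And>i y. y \<in> mspace m \<Longrightarrow> mdist m (x i) y < ep i \<Longrightarrow> y \<in> U i"
    using ep0 by auto
  define \<epsilon> where "\<epsilon> = Min (insert 1 (ep ` J))"
  have finJ: "finite J" using U(1) unfolding J_def .
  have epos: "\<epsilon> > 0" unfolding \<epsilon>_def using finJ ep(1) by auto
  have ele: "\<And>i. i \<in> J \<Longrightarrow> \<epsilon> \<le> ep i" unfolding \<epsilon>_def using finJ by auto
  have "\<exists>c\<in>C. mdist m (x i) c < \<epsilon>/4" for i
    by (rule dense[OF xi]) (use epos in simp)
  then have "\<forall>i. \<exists>c. c \<in> C \<and> mdist m (x i) c < \<epsilon>/4" by blast
  from choice[OF this] obtain cc where cc0: "\<forall>i. cc i \<in> C \<and> mdist m (x i) (cc i) < \<epsilon>/4"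
    by (elim exE)
  have cc: "\<And>i. cc i \<in> C" "\<And>i. mdist m (x i) (cc i) < \<epsilon>/4" using cc0 by auto
  obtain r where r: "r \<in> \<rat>" "\<epsilon>/2 < r" "r < 3*\<epsilon>/4"
    using Rats_dense_in_real[of "\<epsilon>/2" "3*\<epsilon>/4"] epos by auto
  obtain rq where rq: "r = real_of_rat rq" using r(1) by (auto simp: Rats_def)
  obtain qq where qq: "q = real_of_rat qq" using q(1) by (auto simp: Rats_def)
  define L where "L = map (\<lambda>i. (i, cc i, rq)) (sorted_list_of_set J)"
  have setL: "set L = (\<lambda>i. (i, cc i, rq)) ` J" unfolding L_def using finJ by simp
  have "real_of_rat rq > 0" using r epos rq by linarith
  then have rpos: "rq > 0" by (simp add: zero_less_of_rat_iff)
  define \<psi> where "\<psi> u = real_of_rat qq * hL m L u" for u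
  have Llist: "L \<in> lists (UNIV \<times> C \<times> {r. r > 0})" using setL cc rpos by auto
  have "real_of_rat qq > 0" using q qq by linarith
  then have qpos: "qq > 0" by (simp add: zero_less_of_rat_iff)
  have "\<psi> \<in> D0 m C" unfolding D0_def
  proof (rule image_eqI[where x="(qq, L)"])
    show "\<psi> = (\<lambda>(q, L). (\<lambda>u. real_of_rat q * hL m L u)) (qq, L)" by (simp add: \<psi>_def[abs_def])
    show "(qq, L) \<in> {(q, L). q > 0 \<and> L \<in> lists (UNIV \<times> C \<times> {r. r > 0})}" using Llist qpos by simp
  qed
  then have \<psi>D: "\<psi> \<in> DD m C" by (rule D0_DD)
  have tx: "1 \<le> tent m j c rr x" if "(j, c, rr) \<in> set L" for j c rr
  proof -
    have j: "c = cc j" "rr = rq" using that setL by auto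
    have "mdist m (x j) (cc j) < r / 2" using cc(2)[of j] r by simp
    then have "1 \<le> 2 - (2 / r) * mdist m (x j) (cc j)" using r epos by (simp add: field_simps)
    then show ?thesis unfolding tent_def j rq by simp
  qed
  have hx: "hL m L x = 1" using hL_ge[of 1 L m x] tx hL_range[of m L x] by auto
  have psix: "q \<le> \<psi> x" unfolding \<psi>_def hx qq by simp
  have psiy: "\<psi> y \<le> \<phi> y" if y: "y \<in> topspace PX" for y
  proof (cases "hL m L y > 0")
    case False
    then have "hL m L y = 0" using hL_range[of m L y] by simp
    then show ?thesis unfolding \<psi>_def using nn y by simp
  next
    case True
    have yi: "y i \<in> mspace m" for i using y by auto
    have "y i \<in> U i" for i
    proof (cases "i \<in> J")
      case False then show ?thesis unfolding J_def using yi by auto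
    next
      case True
      have "(i, cc i, rq) \<in> set L" using setL True by auto
      then have "0 < tent m i (cc i) rq y" using hL_le \<open>hL m L y > 0\<close> by (meson order.strict_trans2)
      then have "0 < 2 - (2 / r) * mdist m (y i) (cc i)" unfolding tent_def rq by auto
      then have d1: "mdist m (y i) (cc i) < r" using r epos by (simp add: field_simps)
      have "mdist m (x i) (y i) \<le> mdist m (x i) (cc i) + mdist m (cc i) (y i)"
        by (rule mdist_triangle) (use xi yi cc C in auto)
      also have "\<dots> < \<epsilon>/4 + r" using cc(2)[of i] d1 by (simp add: mdist_commute)
      also have "\<dots> < \<epsilon>" using r by simp
      also have "\<dots> \<le> ep i" using ele True by simp
      finally show ?thesis using ep(2) yi by blast
    qed
    then have "y \<in> Op" using U(4) by auto
    then have "q < \<phi> y" unfolding Op_def by simp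
    moreover have "\<psi> y \<le> q" unfolding \<psi>_def qq
      using hL_range[of m L y] qpos by (simp add: mult_left_le zero_le_of_rat_iff less_imp_le)
    ultimately show ?thesis by simp
  qed
  show ?thesis using \<psi>D psix psiy by blast
qed

end

definition polyC :: "real \<Rightarrow> (real \<Rightarrow> real) set" where
  "polyC T = (\<lambda>qs. restrict (\<lambda>t. \<Sum>i<length qs. real_of_rat (qs ! i) * t ^ i) {0..T}) ` UNIV"

lemma mspace_pathspace:
  "mspace (pathspace T) = {f. f \<in> extensional {0..T} \<and> continuous_on {0..T} f}"
proof -
  have "compactin (top_of_set {0..T}) (topspace (top_of_set {0..T}))"
    by (simp add: compactin_subtopology compactin_euclidean_iff)
  then show ?thesis unfolding pathspace_def
    by (subst compactin_mspace_cfunspace) auto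
qed

lemma countable_polyC: "countable (polyC T)"
  unfolding polyC_def by (rule countable_image) (rule countableI_type)

lemma polyC_sub: "polyC T \<subseteq> mspace (pathspace T)"
  unfolding polyC_def mspace_pathspace
proof
  fix p assume "p \<in> (\<lambda>qs. restrict (\<lambda>t. \<Sum>i<length qs. real_of_rat (qs ! i) * t ^ i) {0..T}) ` UNIV"
  then obtain qs where p: "p = restrict (\<lambda>t. \<Sum>i<length qs. real_of_rat (qs ! i) * t ^ i) {0..T}" by blast
  have "continuous_on {0..T} (\<lambda>t. \<Sum>i<length qs. real_of_rat (qs ! i) * t ^ i)"
    by (intro continuous_intros)
  then have "continuous_on {0..T} p" unfolding p by (rule continuous_on_eq) auto
  then show "p \<in> {f. f \<in> extensional {0..T} \<and> continuous_on {0..T} f}" unfolding p by simp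
qed

lemma polyC_dense:
  assumes T: "T \<ge> 0" and f: "f \<in> mspace (pathspace T)" and e: "e > 0"
  shows "\<exists>c\<in>polyC T. mdist (pathspace T) f c < e"
proof -
  have fc: "continuous_on {0..T} f" and fe: "f \<in> extensional {0..T}" using f by (auto simp: mspace_pathspace)
  obtain g where g: "real_polynomial_function g" "\<And>x. x \<in> {0..T} \<Longrightarrow> \<bar>f x - g x\<bar> < e/4"
    using Stone_Weierstrass_real_polynomial_function[OF compact_Icc fc, of "e/4"] e by auto
  obtain a n where an: "g = (\<lambda>x. \<Sum>i\<le>n. a i * x ^ i)"
    using real_polynomial_function_imp_sum[OF g(1)] by blast
  define K where "K = (\<Sum>i\<le>n. T ^ i)"
  have K1: "K \<ge> 1" unfolding K_def using T
    by (simp add: sum.atMost_shift sum_nonneg)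
  define \<delta> where "\<delta> = e / (4 * K)"
  have dpos: "\<delta> > 0" unfolding \<delta>_def using e K1 by simp
  have "\<forall>i. \<exists>b. b \<in> \<rat> \<and> \<bar>a i - b\<bar> < \<delta>"
  proof
    fix i
    obtain b where "b \<in> \<rat>" "a i - \<delta> < b" "b < a i" using Rats_dense_in_real[of "a i - \<delta>" "a i"] dpos by auto
    then show "\<exists>b. b \<in> \<rat> \<and> \<bar>a i - b\<bar> < \<delta>" by (intro exI[of _ b]) auto
  qed
  from choice[OF this] obtain b where b: "\<forall>i. b i \<in> \<rat> \<and> \<bar>a i - b i\<bar> < \<delta>" by (elim exE)
  have "\<forall>i. \<exists>r. b i = real_of_rat r" using b by (auto simp: Rats_def)
  from choice[OF this] obtain bq where bq: "\<forall>i. b i = real_of_rat (bq i)" by (elim exE)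
  define qs where "qs = map bq [0..<Suc n]"
  define p where "p = restrict (\<lambda>t. \<Sum>i<length qs. real_of_rat (qs ! i) * t ^ i) {0..T}"
  have pC: "p \<in> polyC T" unfolding p_def polyC_def by simp
  have peq: "p x = (\<Sum>i\<le>n. b i * x ^ i)" if "x \<in> {0..T}" for x
  proof -
    have "p x = (\<Sum>i<Suc n. real_of_rat (qs ! i) * x ^ i)" unfolding p_def qs_def using that by simp
    also have "\<dots> = (\<Sum>i<Suc n. b i * x ^ i)"
      by (rule sum.cong) (auto simp del: upt_Suc simp: qs_def bq)
    finally show ?thesis by (simp add: lessThan_Suc_atMost)
  qed
  have close: "\<bar>f x - p x\<bar> \<le> e/2" if x: "x \<in> {0..T}" for x
  proof -
    have "\<bar>g x - p x\<bar> = \<bar>\<Sum>i\<le>n. (a i - b i) * x ^ i\<bar>"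
      unfolding an peq[OF x] by (simp add: sum_subtractf left_diff_distrib)
    also have "\<dots> \<le> (\<Sum>i\<le>n. \<bar>(a i - b i) * x ^ i\<bar>)" by (rule sum_abs)
    also have "\<dots> \<le> (\<Sum>i\<le>n. \<delta> * T ^ i)"
    proof (rule sum_mono)
      fix i assume "i \<in> {..n}"
      have "\<bar>x ^ i\<bar> \<le> T ^ i" using x by (simp add: power_mono power_abs)
      moreover have "\<bar>a i - b i\<bar> \<le> \<delta>" using b by (simp add: less_imp_le)
      ultimately show "\<bar>(a i - b i) * x ^ i\<bar> \<le> \<delta> * T ^ i"
        by (simp add: abs_mult mult_mono)
    qed
    also have "\<dots> = \<delta> * K" unfolding K_def by (simp add: sum_distrib_left)
    also have "\<dots> = e/4" unfolding \<delta>_def using K1 by simp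
    finally have "\<bar>g x - p x\<bar> \<le> e/4" .
    then show ?thesis using g(2)[OF x] by linarith
  qed
  have "mdist (pathspace T) f p \<le> e/2"
    unfolding pathspace_def
    by (rule mdist_cfunspace_le) (use e close in \<open>auto simp: dist_real_def\<close>)
  then show ?thesis using pC e by (intro bexI[of _ p]) auto
qed

lemma modI_range: "modI n k \<in> Iset n"
proof -
  have e: "int (Nn n) = 2 * int n + 1" by (simp add: Nn_def)
  have a: "0 \<le> (k + int n) mod int (Nn n)" "(k + int n) mod int (Nn n) < int (Nn n)"
    unfolding e by (rule pos_mod_sign, simp, rule pos_mod_bound, simp)
  have "- int n \<le> modI n k \<and> modI n k \<le> int n" unfolding modI_def using a e by linarith
  then show ?thesis by (simp add: Iset_def)
qed

lemma modI_add: "modI n (modI n a + b) = modI n (a + b)"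
proof -
  have "(modI n a + b + int n) mod int (Nn n) = ((a + int n) mod int (Nn n) + b) mod int (Nn n)"
    unfolding modI_def by (simp add: algebra_simps)
  also have "\<dots> = (a + int n + b) mod int (Nn n)" by (simp add: mod_add_left_eq)
  finally show ?thesis unfolding modI_def by (simp add: algebra_simps)
qed

lemma modI_id: "i \<in> Iset n \<Longrightarrow> modI n i = i"
  unfolding modI_def Iset_def Nn_def by auto

lemma finite_Iset: "finite (Iset n)" unfolding Iset_def by simp

lemma card_Iset: "card (Iset n) = Nn n"
  unfolding Iset_def Nn_def by simp

lemma uniform_shift_inv:
  fixes k :: int and n :: nat
  defines "U \<equiv> uniform_measure (count_space UNIV) (Iset n)"
  shows "distr U (count_space UNIV) (\<lambda>i. modI n (k + i)) = U"
proof (rule measure_eqI)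
  show "sets (distr U (count_space UNIV) (\<lambda>i. modI n (k + i))) = sets U" by (simp add: U_def)
  fix A assume "A \<in> sets (distr U (count_space UNIV) (\<lambda>i. modI n (k + i)))"
  let ?\<pi> = "\<lambda>i. modI n (k + i)"
  have meas: "?\<pi> \<in> measurable U (count_space UNIV)"
    unfolding U_def by (simp add: measurable_cong_sets[OF sets_uniform_measure refl])
  have inj: "inj_on ?\<pi> (Iset n)"
  proof (rule inj_onI)
    fix x y assume xy: "x \<in> Iset n" "y \<in> Iset n" "?\<pi> x = ?\<pi> y"
    have "modI n (modI n (k + x) + - k) = modI n (modI n (k + y) + - k)" using xy(3) by simp
    moreover have "modI n (modI n (k + x) + - k) = modI n x" using modI_add[of n "k + x" "- k"] by simp
    moreover have "modI n (modI n (k + y) + - k) = modI n y" using modI_add[of n "k + y" "- k"] by simp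
    ultimately have "modI n x = modI n y" by simp
    then show "x = y" using xy by (simp add: modI_id)
  qed
  have img: "?\<pi> ` Iset n = Iset n"
  proof
    show "?\<pi> ` Iset n \<subseteq> Iset n" using modI_range by auto
    show "Iset n \<subseteq> ?\<pi> ` Iset n"
    proof
      fix y assume y: "y \<in> Iset n"
      have "?\<pi> (modI n (y - k)) = modI n (y - k + k)"
        by (metis add.commute modI_add)
      also have "\<dots> = y" using y by (simp add: modI_id)
      finally show "y \<in> ?\<pi> ` Iset n" using modI_range by (metis image_eqI)
    qed
  qed
  have cardeq: "card (?\<pi> -` A \<inter> Iset n) = card (A \<inter> Iset n)"
  proof -
    have "?\<pi> ` (?\<pi> -` A \<inter> Iset n) = A \<inter> Iset n"
    proof
      show "?\<pi> ` (?\<pi> -` A \<inter> Iset n) \<subseteq> A \<inter> Iset n" using img by auto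
      show "A \<inter> Iset n \<subseteq> ?\<pi> ` (?\<pi> -` A \<inter> Iset n)"
      proof
        fix x assume x: "x \<in> A \<inter> Iset n"
        then have "x \<in> ?\<pi> ` Iset n" using img by simp
        then obtain y where y: "y \<in> Iset n" "x = ?\<pi> y" by (rule imageE)
        then show "x \<in> ?\<pi> ` (?\<pi> -` A \<inter> Iset n)" using x by auto
      qed
    qed
    moreover have "inj_on ?\<pi> (?\<pi> -` A \<inter> Iset n)" using inj by (rule inj_on_subset) auto
    ultimately show ?thesis by (metis card_image)
  qed
  have "emeasure (distr U (count_space UNIV) ?\<pi>) A = emeasure U (?\<pi> -` A \<inter> space U)"
    by (rule emeasure_distr[OF meas]) simp
  also have "\<dots> = emeasure (count_space UNIV) (Iset n \<inter> (?\<pi> -` A)) / emeasure (count_space UNIV) (Iset n)"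
    unfolding U_def by simp
  also have "\<dots> = emeasure (count_space UNIV) (Iset n \<inter> A) / emeasure (count_space UNIV) (Iset n)"
    using cardeq finite_Iset by (simp add: Int_commute)
  also have "\<dots> = emeasure U A" unfolding U_def by simp
  finally show "emeasure (distr U (count_space UNIV) ?\<pi>) A = emeasure U A" .
qed

lemma shift_cont: "continuous_map (seqtop T) (seqtop T) (shift k)"
  unfolding seqtop_def shift_def continuous_map_componentwise_UNIV
  by (auto intro: continuous_map_product_projection)

lemma emp_in_PS:
  assumes u: "\<And>j. j \<in> Iset n \<Longrightarrow> u j \<in> topspace (pathtop T)"
  shows "emp_measure T n u \<in> PS T"
proof -
  define U where "U = uniform_measure (count_space UNIV) (Iset n)"
  define w where "w = periodic_ext n u"
  define g where "g i = shift i w" for i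
  let ?B = "borel_of (seqtop T)"
  have wt: "w j \<in> topspace (pathtop T)" for j unfolding w_def periodic_ext_def using u modI_range by blast
  have gm: "g \<in> measurable U ?B"
  proof -
    have "g \<in> measurable (count_space UNIV) ?B"
      using wt by (auto simp: borel_of_space seqtop_def g_def shift_def)
    then show ?thesis unfolding U_def by (simp add: measurable_cong_sets[OF sets_uniform_measure refl])
  qed
  have emp: "emp_measure T n u = distr U ?B g"
    unfolding emp_measure_def U_def g_def w_def by simp
  have pU: "prob_space U" unfolding U_def
    by (rule prob_space_uniform_measure) (simp_all add: finite_Iset card_Iset Nn_def del: of_nat_Suc)
  have ps: "prob_space (emp_measure T n u)" unfolding emp
    by (rule prob_space.prob_space_distr[OF pU gm])
  have sh: "distr (emp_measure T n u) ?B (shift k) = emp_measure T n u" for k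
  proof -
    have shm: "shift k \<in> measurable ?B ?B" by (rule cont_map_measurable[OF shift_cont])
    have pim: "(\<lambda>i. modI n (k + i)) \<in> measurable U (count_space UNIV)"
      unfolding U_def by (simp add: measurable_cong_sets[OF sets_uniform_measure refl])
    have gm': "g \<in> measurable (count_space UNIV) ?B"
      using gm unfolding U_def by (simp add: measurable_cong_sets[OF sets_uniform_measure refl])
    have ma: "\<And>a b. modI n (b + modI n a) = modI n (b + a)" using modI_add by (metis add.commute)
    have comp: "shift k \<circ> g = g \<circ> (\<lambda>i. modI n (k + i))"
    proof
      fix i
      show "(shift k \<circ> g) i = (g \<circ> (\<lambda>i. modI n (k + i))) i"
        unfolding g_def w_def shift_def periodic_ext_def comp_def
        by (rule ext) (simp add: ma algebra_simps)
    qed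
    have "distr (emp_measure T n u) ?B (shift k) = distr U ?B (shift k \<circ> g)"
      unfolding emp by (rule distr_distr[OF shm gm])
    also have "\<dots> = distr U ?B (g \<circ> (\<lambda>i. modI n (k + i)))" by (simp add: comp)
    also have "\<dots> = distr (distr U (count_space UNIV) (\<lambda>i. modI n (k + i))) ?B g"
      by (rule distr_distr[OF gm' pim, symmetric])
    also have "\<dots> = distr U ?B g" unfolding U_def uniform_shift_inv by simp
    finally show ?thesis unfolding emp .
  qed
  show ?thesis unfolding PS_def using ps sh by (simp add: emp_measure_def)
qed

lemma DD_bounded: "\<psi> \<in> DD m C \<Longrightarrow> \<exists>B. \<forall>u. \<bar>\<psi> u\<bar> \<le> B"
proof -
  have "Ps \<in> lists (D0 m C) \<Longrightarrow> \<exists>B. \<forall>u. \<bar>fmax Ps u\<bar> \<le> B" for Ps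
  proof (induction Ps)
    case Nil
    have "\<forall>u. \<bar>fmax [] u\<bar> \<le> 0" by (simp add: fmax_def)
    then show ?case by blast
  next
    case (Cons p Ps)
    then have pD: "p \<in> D0 m C" and PsD: "Ps \<in> lists (D0 m C)" by auto
    obtain B1 where B1: "\<forall>u. \<bar>fmax Ps u\<bar> \<le> B1" using Cons.IH[OF PsD] by blast
    obtain q L where qL: "p = (\<lambda>u. real_of_rat q * hL m L u)" "q > 0" using pD by (rule D0_elim)
    have "\<bar>p u\<bar> \<le> real_of_rat q" for u
      unfolding qL(1) using hL_range[of m L u] qL(2) by (simp add: abs_mult mult_left_le)
    then have "\<forall>u. \<bar>fmax (p # Ps) u\<bar> \<le> max B1 (real_of_rat q)"
    proof (intro allI)
      fix u
      have "fmax (p # Ps) u = max (p u) (fmax Ps u)" by (simp add: fmax_def)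
      moreover have "\<bar>p u\<bar> \<le> real_of_rat q" "\<bar>fmax Ps u\<bar> \<le> B1" using \<open>\<And>u. \<bar>p u\<bar> \<le> real_of_rat q\<close> B1 by auto
      ultimately show "\<bar>fmax (p # Ps) u\<bar> \<le> max B1 (real_of_rat q)" by (smt (verit))
    qed
    then show ?case by blast
  qed
  then show "\<psi> \<in> DD m C \<Longrightarrow> \<exists>B. \<forall>u. \<bar>\<psi> u\<bar> \<le> B" unfolding DD_def by blast
qed

lemma topspace_weaktop: "topspace (weaktop T) = PS T"
proof -
  have "(\<lambda>x. 0::real) \<in> bcont (seqtop T)" unfolding bcont_def by auto
  then have "UNIV \<in> {{\<mu>. (\<integral>x. \<phi> x \<partial>\<mu>) \<in> U} | \<phi> U. \<phi> \<in> bcont (seqtop T) \<and> open U}"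
    by (intro CollectI exI[of _ "\<lambda>x. 0::real"] exI[of _ UNIV]) auto
  then show ?thesis unfolding weaktop_def by auto
qed

lemma limitin_weaktop:
  assumes mu: "\<mu> \<in> PS T" and Y: "\<And>n. Y n \<in> PS T"
    and conv: "\<And>\<phi>. \<phi> \<in> bcont (seqtop T) \<Longrightarrow> (\<lambda>n. \<integral>x. \<phi> x \<partial>Y n) \<longlonglongrightarrow> (\<integral>x. \<phi> x \<partial>\<mu>)"
  shows "limitin (weaktop T) Y \<mu> sequentially"
proof -
  let ?S = "{{\<mu>. (\<integral>x. \<phi> x \<partial>\<mu>) \<in> U} | \<phi> U. \<phi> \<in> bcont (seqtop T) \<and> open U}"
  have gen: "generate_topology_on ?S V \<Longrightarrow> \<mu> \<in> V \<Longrightarrow> eventually (\<lambda>n. Y n \<in> V) sequentially" for V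
  proof (induction rule: generate_topology_on.induct)
    case Empty then show ?case by simp
  next
    case (Int a b) then show ?case by (auto intro: eventually_conj)
  next
    case (UN K)
    then obtain k where "k \<in> K" "\<mu> \<in> k" by auto
    then have "eventually (\<lambda>n. Y n \<in> k) sequentially" using UN by blast
    then show ?case by (rule eventually_mono) (use \<open>k \<in> K\<close> in auto)
  next
    case (Basis s)
    then obtain \<phi> U where s: "s = {\<mu>. (\<integral>x. \<phi> x \<partial>\<mu>) \<in> U}" "\<phi> \<in> bcont (seqtop T)" "open U" by blast
    have "(\<integral>x. \<phi> x \<partial>\<mu>) \<in> U" using Basis s by simp
    then have "eventually (\<lambda>n. (\<integral>x. \<phi> x \<partial>Y n) \<in> U) sequentially"
      by (rule topological_tendstoD[OF conv[OF s(2)] s(3)])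
    then show ?case unfolding s by simp
  qed
  show ?thesis unfolding limitin_def
  proof (intro conjI allI impI)
    show "\<mu> \<in> topspace (weaktop T)" using mu by (simp add: topspace_weaktop)
    fix W assume W: "openin (weaktop T) W \<and> \<mu> \<in> W"
    then obtain V where V: "openin (topology_generated_by ?S) V" "W = PS T \<inter> V"
      unfolding weaktop_def openin_subtopology by (auto simp: Int_commute)
    have "generate_topology_on ?S V" using V(1) by (simp add: openin_topology_generated_by_iff)
    then have "eventually (\<lambda>n. Y n \<in> V) sequentially" using gen W V(2) by blast
    then show "eventually (\<lambda>n. Y n \<in> W) sequentially" using Y V(2) by (auto elim: eventually_mono)
  qed
qed

theorem corollary2p7:
  fixes \<sigma> T :: real
    and f :: "real \<Rightarrow> real"
    and R :: "int \<Rightarrow> int \<Rightarrow> real"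
    and a b :: "int \<Rightarrow> real"
    and M :: "'w measure"
    and J :: "nat \<Rightarrow> 'w \<Rightarrow> int \<times> int \<Rightarrow> real"
    and B V :: "nat \<Rightarrow> 'w \<Rightarrow> int \<Rightarrow> real \<Rightarrow> real"
    and H :: "(int \<Rightarrow> real \<Rightarrow> real) measure \<Rightarrow> ereal"
    and \<mu>star :: "(int \<Rightarrow> real \<Rightarrow> real) measure"
  assumes sigma_pos: "\<sigma> > 0" and T_pos: "T > 0"
    and f_range: "\<forall>x. f x \<in> {0..1}" and f_lip: "1-lipschitz_on UNIV f"
    and R_bound: "\<forall>k l. \<bar>R k l\<bar> \<le> a k * b l"
    and a_pos: "\<forall>k. a k > 0" and b_pos: "\<forall>l. b l > 0"
    and a_decay: "\<forall>e>0. \<exists>K. \<forall>k. \<bar>k\<bar> \<ge> K \<longrightarrow> \<bar>real_of_int k\<bar> ^ 3 * a k < e"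
    and b_summable: "b summable_on UNIV"
    and R_field: "gaussian_field_autocorrelation R"
    and R_spectral: "\<forall>\<phi>1\<in>{-pi..<pi}. \<forall>\<phi>2\<in>{-pi..<pi}.
                        spectral_density R \<phi>1 \<phi>2 \<in> \<real> \<and> Re (spectral_density R \<phi>1 \<phi>2) > 0"
    and M_prob: "prob_space M"
    and J_gauss: "\<forall>n. jointly_gaussian M (\<lambda>ij \<omega>. J n \<omega> ij) (Iset n \<times> Iset n)"
    and J_centered: "\<forall>n. \<forall>i\<in>Iset n. \<forall>j\<in>Iset n. (\<integral>\<omega>. J n \<omega> (i, j) \<partial>M) = 0"
    and J_cov: "\<forall>n. \<forall>i\<in>Iset n. \<forall>j\<in>Iset n. \<forall>k\<in>Iset n. \<forall>l\<in>Iset n.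
                  (\<integral>\<omega>. J n \<omega> (i, j) * J n \<omega> (k, l) \<partial>M)
                    = R (modI n (k - i)) (modI n (l - j)) / real (Nn n)"
    and B_bm: "\<forall>n. \<forall>i\<in>Iset n. std_brownian M T (\<lambda>\<omega>. B n \<omega> i)"
    and JB_indep: "\<forall>n. indep_noise M T (Iset n) (J n) (B n)"
    and V_sol: "\<forall>n. \<forall>\<omega>\<in>space M. \<forall>i\<in>Iset n.
                  continuous_on {0..T} (V n \<omega> i) \<and>
                  (\<forall>t\<in>{0..T}. V n \<omega> i t =
                     integral {0..t} (\<lambda>s. \<Sum>j\<in>Iset n. J n \<omega> (i, j) * f (V n \<omega> j s))
                     + \<sigma> * B n \<omega> i t)"
    and LDP_H: "LDP (weaktop T)
                  (\<lambda>n. distr M (borel_of (weaktop T))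
                         (\<lambda>\<omega>. emp_measure T n (\<lambda>j. restrict (V n \<omega> j) {0..T})))
                  (\<lambda>n. real (Nn n)) H"
    and H_good: "good_rate_function (weaktop T) H"
    and mu_star: "\<mu>star \<in> PS T" "H \<mu>star = 0"
    and H_unique_zero: "\<forall>\<mu>\<in>PS T. H \<mu> = 0 \<longrightarrow> \<mu> = \<mu>star"
  shows "AE \<omega> in M. limitin (weaktop T)
           (\<lambda>n. emp_measure T n (\<lambda>j. restrict (V n \<omega> j) {0..T})) \<mu>star sequentially"
proof -
  define Y where "Y n \<omega> = emp_measure T n (\<lambda>j. restrict (V n \<omega> j) {0..T})" for n \<omega>
  define m where "m = pathspace T"
  define C where "C = polyC T"
  define D where "D = DD m C"
  have seq: "seqtop T = product_topology (\<lambda>_::int. mtopology_of m) UNIV"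
    unfolding seqtop_def pathtop_def m_def ..
  have Csub: "C \<subseteq> mspace m" unfolding C_def m_def by (rule polyC_sub)
  have Cdense: "\<And>x e. x \<in> mspace m \<Longrightarrow> e > 0 \<Longrightarrow> \<exists>c\<in>C. mdist m x c < e"
    unfolding C_def m_def using polyC_dense T_pos by (meson less_imp_le)
  have cD: "countable D" unfolding D_def C_def by (rule countable_DD[OF countable_polyC])
  have Dcont: "\<And>\<psi>. \<psi> \<in> D \<Longrightarrow> continuous_map (seqtop T) euclideanreal \<psi>"
    unfolding seq D_def using DD_cont[OF Csub] by blast
  have Dbc: "\<And>\<psi>. \<psi> \<in> D \<Longrightarrow> \<psi> \<in> bcont (seqtop T)"
  proof -
    fix \<psi> assume p: "\<psi> \<in> D"
    obtain B where "\<forall>u. \<bar>\<psi> u\<bar> \<le> B" using DD_bounded p unfolding D_def by blast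
    then show "\<psi> \<in> bcont (seqtop T)" unfolding bcont_def using Dcont[OF p] by blast
  qed
  have Ytop: "Y n \<omega> \<in> PS T" if "\<omega> \<in> space M" for n \<omega>
    unfolding Y_def
  proof (rule emp_in_PS)
    fix j assume j: "j \<in> Iset n"
    have "continuous_on {0..T} (V n \<omega> j)" using V_sol that j by blast
    then have "continuous_on {0..T} (restrict (V n \<omega> j) {0..T})"
      by (rule continuous_on_eq) auto
    then show "restrict (V n \<omega> j) {0..T} \<in> topspace (pathtop T)"
      unfolding pathtop_def topspace_mtopology_of mspace_pathspace by simp
  qed
  have muPS: "\<mu>star \<in> PS T" by (rule mu_star(1))
  let ?c = "\<lambda>\<psi>::(int \<Rightarrow> real \<Rightarrow> real) \<Rightarrow> real. (\<integral>x. \<psi> x \<partial>\<mu>star)"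
  define F where "F (\<psi> :: (int \<Rightarrow> real \<Rightarrow> real) \<Rightarrow> real) (k::nat) = PS T - (PS T \<inter> {\<nu>. (\<integral>x. \<psi> x \<partial>\<nu>) \<in> ball (?c \<psi>) (1 / Suc k)})" for \<psi> k
  have Fclosed: "closedin (weaktop T) (F \<psi> k)" if p: "\<psi> \<in> D" for \<psi> k
  proof -
    let ?S = "{{\<mu>. (\<integral>x. \<phi> x \<partial>\<mu>) \<in> U} | \<phi> U. \<phi> \<in> bcont (seqtop T) \<and> open U}"
    have "{\<nu>. (\<integral>x. \<psi> x \<partial>\<nu>) \<in> ball (?c \<psi>) (1 / Suc k)} \<in> ?S"
      using Dbc[OF p] by blast
    then have "openin (topology_generated_by ?S) {\<nu>. (\<integral>x. \<psi> x \<partial>\<nu>) \<in> ball (?c \<psi>) (1 / Suc k)}"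
      by (rule topology_generated_by_Basis)
    then have o: "openin (weaktop T) (PS T \<inter> {\<nu>. (\<integral>x. \<psi> x \<partial>\<nu>) \<in> ball (?c \<psi>) (1 / Suc k)})"
      unfolding weaktop_def openin_subtopology by (auto simp: Int_commute)
    show ?thesis unfolding F_def closedin_def topspace_weaktop
      using o by (simp add: Diff_Diff_Int Int_absorb1 topspace_weaktop)
  qed
  have Fmu: "\<mu>star \<notin> F \<psi> k" for \<psi> k unfolding F_def using muPS by simp
  have AE1: "AE \<omega> in M. eventually (\<lambda>n. Y n \<omega> \<notin> F \<psi> k) sequentially" if p: "\<psi> \<in> D" for \<psi> k
  proof (rule ldp_bc[OF M_prob _ _ H_good])
    show "\<And>n \<omega>. \<omega> \<in> space M \<Longrightarrow> Y n \<omega> \<in> topspace (weaktop T)"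
      using Ytop by (simp add: topspace_weaktop)
    show "LDP (weaktop T) (\<lambda>n. distr M (borel_of (weaktop T)) (Y n)) (\<lambda>n. real (Nn n)) H"
      using LDP_H unfolding Y_def by simp
    show "\<mu>star \<in> topspace (weaktop T)" using muPS by (simp add: topspace_weaktop)
    show "H \<mu>star = 0" by (rule mu_star(2))
    show "\<forall>x\<in>topspace (weaktop T). H x = 0 \<longrightarrow> x = \<mu>star"
      using H_unique_zero by (simp add: topspace_weaktop)
    show "closedin (weaktop T) (F \<psi> k)" by (rule Fclosed[OF p])
    show "\<mu>star \<notin> F \<psi> k" by (rule Fmu)
  qed
  have "AE \<omega> in M. \<forall>\<psi>\<in>D. \<forall>k. eventually (\<lambda>n. Y n \<omega> \<notin> F \<psi> k) sequentially"
    using AE1 by (simp add: AE_ball_countable[OF cD] AE_all_countable)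
  then show ?thesis
  proof (rule AE_mp[OF _ AE_I2], intro impI)
    fix \<omega> assume \<omega>: "\<omega> \<in> space M"
      and ev: "\<forall>\<psi>\<in>D. \<forall>k. eventually (\<lambda>n. Y n \<omega> \<notin> F \<psi> k) sequentially"
    have YPS: "\<And>n. Y n \<omega> \<in> PS T" using Ytop[OF \<omega>] .
    have pr: "prob_space (Y n \<omega>)" "sets (Y n \<omega>) = sets (borel_of (seqtop T))" for n
      using YPS[of n] unfolding PS_def by auto
    have prm: "prob_space \<mu>star" "sets \<mu>star = sets (borel_of (seqtop T))"
      using muPS unfolding PS_def by auto
    have convD: "(\<lambda>n. \<integral>x. \<psi> x \<partial>Y n \<omega>) \<longlonglongrightarrow> ?c \<psi>" if p: "\<psi> \<in> D" for \<psi>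
    proof (rule LIMSEQ_I)
      fix r :: real assume r: "r > 0"
      obtain k where k: "inverse (real (Suc k)) < r" using r reals_Archimedean by blast
      obtain n0 where n0: "\<And>n. n \<ge> n0 \<Longrightarrow> Y n \<omega> \<notin> F \<psi> k"
        using ev p unfolding eventually_sequentially by blast
      show "\<exists>no. \<forall>n\<ge>no. norm ((\<integral>x. \<psi> x \<partial>Y n \<omega>) - ?c \<psi>) < r"
      proof (intro exI allI impI)
        fix n assume "n \<ge> n0"
        then have "Y n \<omega> \<notin> F \<psi> k" by (rule n0)
        then have "(\<integral>x. \<psi> x \<partial>Y n \<omega>) \<in> ball (?c \<psi>) (1 / Suc k)" using YPS[of n] unfolding F_def by blast
        then show "norm ((\<integral>x. \<psi> x \<partial>Y n \<omega>) - ?c \<psi>) < r"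
          using k by (simp add: dist_norm norm_minus_commute divide_inverse)
      qed
    qed
    have lower: "eventually (\<lambda>n. (\<integral>x. \<phi> x \<partial>Y n \<omega>) > ?c \<phi> - e) sequentially"
      if phi: "\<phi> \<in> bcont (seqtop T)" and e: "e > 0" for \<phi> e
    proof -
      obtain B where B: "\<forall>x\<in>topspace (seqtop T). \<bar>\<phi> x\<bar> \<le> B" "continuous_map (seqtop T) euclideanreal \<phi>"
        using phi unfolding bcont_def by blast
      show ?thesis
      proof (rule portmanteau_lower[OF cD Dcont _ _ _ _ pr prm convD B(2) _ e])
        show "\<And>\<psi>1 \<psi>2. \<psi>1 \<in> D \<Longrightarrow> \<psi>2 \<in> D \<Longrightarrow> (\<lambda>x. max (\<psi>1 x) (\<psi>2 x)) \<in> D"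
          unfolding D_def by (rule DD_max)
        show "\<And>\<psi> x. \<psi> \<in> D \<Longrightarrow> x \<in> topspace (seqtop T) \<Longrightarrow> 0 \<le> \<psi> x"
          unfolding D_def using DD_nonneg by blast
        show "(\<lambda>x. 0) \<in> D" unfolding D_def by (rule DD_zero)
        show "\<And>x. x \<in> topspace (seqtop T) \<Longrightarrow> \<bar>\<phi> x\<bar> \<le> B" using B(1) by blast
        fix \<phi>' x q
        assume a: "continuous_map (seqtop T) euclideanreal \<phi>'" "\<forall>y\<in>topspace (seqtop T). 0 \<le> \<phi>' y"
          "x \<in> topspace (seqtop T)" "q \<in> \<rat>" "0 < q" "q < \<phi>' x"
        show "\<exists>\<psi>\<in>D. (\<forall>y\<in>topspace (seqtop T). \<psi> y \<le> \<phi>' y) \<and> q \<le> \<psi> x"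
          unfolding D_def seq
          by (rule DD_approx) (use Csub Cdense a[unfolded seq] in auto)
      qed
    qed
    have convall: "(\<lambda>n. \<integral>x. \<phi> x \<partial>Y n \<omega>) \<longlonglongrightarrow> ?c \<phi>" if phi: "\<phi> \<in> bcont (seqtop T)" for \<phi>
    proof (rule LIMSEQ_I)
      fix r :: real assume r: "r > 0"
      have mphi: "(\<lambda>x. - \<phi> x) \<in> bcont (seqtop T)" using phi unfolding bcont_def
        by (auto intro: continuous_intros)
      have ev1: "eventually (\<lambda>n. (\<integral>x. \<phi> x \<partial>Y n \<omega>) > ?c \<phi> - r) sequentially" by (rule lower[OF phi r])
      have ev2: "eventually (\<lambda>n. (\<integral>x. - \<phi> x \<partial>Y n \<omega>) > ?c (\<lambda>x. - \<phi> x) - r) sequentially"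
        by (rule lower[OF mphi r])
      have "eventually (\<lambda>n. norm ((\<integral>x. \<phi> x \<partial>Y n \<omega>) - ?c \<phi>) < r) sequentially"
        using eventually_conj[OF ev1 ev2] by eventually_elim (auto simp: abs_less_iff)
      then show "\<exists>no. \<forall>n\<ge>no. norm ((\<integral>x. \<phi> x \<partial>Y n \<omega>) - ?c \<phi>) < r"
        unfolding eventually_sequentially .
    qed
    show "limitin (weaktop T) (\<lambda>n. emp_measure T n (\<lambda>j. restrict (V n \<omega> j) {0..T})) \<mu>star sequentially"
      using limitin_weaktop[OF muPS YPS convall] unfolding Y_def by simp
  qed
qed

end
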